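(* Let $B\subseteq\mathbb{N}$ have positive upper density. Then there exist a unary function $f\in\mathscr{C}_{I_{\bar d=0}}$ and a strictly increasing sequence $(n_i)_{i\ge1}$ of natural numbers such that $f[B]\supseteq\bigcup_{i\ge1}[n_i,2n_i)$.
   Context: $\mathbb{N}=\{0,1,2,\dots\}$. For $A\subseteq\mathbb{N}$, $\bar d(A)=\limsup_{n\to\infty}\frac{|A\cap[0,n)|}{n}$. $\mathscr{C}_{I_{\bar d=0}}$ is the set of all finitary functions $f:\mathbb{N}^k\to\mathbb{N}$ ($k\ge1$) such that $\bar d(f[A^k])=0$ whenever $\bar d(A)=0$. Intervals are intervals of natural numbers. *)

theory Defs
  imports "HOL-Analysis.Analysis" "HOL-Library.Liminf_Limsup"
begin

definition upper_density :: "nat set \<Rightarrow> ereal" where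
  "upper_density A = limsup (\<lambda>n. ereal (real (card (A \<inter> {0..<n})) / real n))"

text \<open>A k-ary finitary function is represented as f :: nat list => nat, applied to lists
of length k. The clone C_{I_{d=0}}: f[A^k] has upper density 0 whenever A has.\<close>
definition tuples :: "nat \<Rightarrow> nat set \<Rightarrow> nat list set" where
  "tuples k A = {xs. length xs = k \<and> set xs \<subseteq> A}"

definition in_C_Id0 :: "nat \<Rightarrow> (nat list \<Rightarrow> nat) \<Rightarrow> bool" where
  "in_C_Id0 k f \<longleftrightarrow> k \<ge> 1 \<and>
     (\<forall>A. upper_density A = 0 \<longrightarrow> upper_density (f ` tuples k A) = 0)"

definition unary_fn :: "(nat \<Rightarrow> nat) \<Rightarrow> nat list \<Rightarrow> nat" where
  "unary_fn f xs = f (hd xs)"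

end

theory Submission
  imports Defs
begin

lemma ud_zero_tendsto:
  assumes "upper_density A = 0"
  shows "(\<lambda>n. real (card (A \<inter> {0..<n})) / real n) \<longlonglongrightarrow> 0"
proof (rule order_tendstoI)
  fix a :: real assume "a < 0"
  show "\<forall>\<^sub>F n in sequentially. a < real (card (A \<inter> {0..<n})) / real n"
    using \<open>a < 0\<close> by (intro always_eventually allI) (smt (verit) divide_nonneg_nonneg of_nat_0_le_iff)
next
  fix a :: real assume "0 < a"
  have "limsup (\<lambda>n. ereal (real (card (A \<inter> {0..<n})) / real n)) < ereal a"
    using assms \<open>0 < a\<close> unfolding upper_density_def by simp
  from Limsup_lessD[OF this]
  show "\<forall>\<^sub>F n in sequentially. real (card (A \<inter> {0..<n})) / real n < a"
    by simp
qed

lemma tendsto_ud_zero: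
  assumes "(\<lambda>n. real (card (A \<inter> {0..<n})) / real n) \<longlonglongrightarrow> 0"
  shows "upper_density A = 0"
proof -
  have "(\<lambda>n. ereal (real (card (A \<inter> {0..<n})) / real n)) \<longlonglongrightarrow> ereal 0"
    using assms by (rule tendsto_ereal)
  then have "limsup (\<lambda>n. ereal (real (card (A \<inter> {0..<n})) / real n)) = ereal 0"
    by (rule lim_imp_Limsup[OF trivial_limit_sequentially])
  then show ?thesis unfolding upper_density_def by (simp add: zero_ereal_def)
qed

definition S :: "nat set \<Rightarrow> nat \<Rightarrow> nat" where
  "S B x = card (B \<inter> {0..<x})"

lemma S_mono: "x \<le> y \<Longrightarrow> S B x \<le> S B y"
  unfolding S_def by (intro card_mono) auto

lemma S_Suc: "S B (Suc x) = (if x \<in> B then S B x + 1 else S B x)"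
proof -
  have "B \<inter> {0..<Suc x} = (if x \<in> B then insert x (B \<inter> {0..<x}) else B \<inter> {0..<x})"
    by (auto simp: less_Suc_eq)
  then show ?thesis unfolding S_def by auto
qed

lemma S_0: "S B 0 = 0" unfolding S_def by simp

lemma S_hit:
  assumes "y < S B m"
  shows "\<exists>x\<in>B. x < m \<and> S B x = y"
proof -
  define x' where "x' = (LEAST x. y < S B x)"
  have x'1: "y < S B x'" unfolding x'_def using assms by (rule LeastI)
  have x'2: "x' \<le> m" unfolding x'_def using assms by (rule Least_le)
  have "x' \<noteq> 0" using x'1 S_0[of B] by (metis not_less0)
  then obtain x where x: "x' = Suc x" by (cases x') auto
  have "\<not> y < S B x"
  proof
    assume "y < S B x"
    then have "x' \<le> x" unfolding x'_def by (rule Least_le)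
    with x show False by simp
  qed
  then have "S B x \<le> y" by simp
  with x'1 x have "x \<in> B" "S B x = y" using S_Suc[of B x] by (auto split: if_splits)
  then show ?thesis using x x'2 by (intro bexI[of _ x]) auto
qed

lemma tuples_1: "tuples 1 A = (\<lambda>a. [a]) ` A"
  unfolding tuples_def
proof (intro equalityI subsetI)
  fix xs assume "xs \<in> {xs. length xs = 1 \<and> set xs \<subseteq> A}"
  then have l: "length xs = 1" and s: "set xs \<subseteq> A" by auto
  from l obtain a where a: "xs = [a]" by (cases xs) auto
  with s show "xs \<in> (\<lambda>a. [a]) ` A" by auto
qed auto

theorem mainTheorem10:
  fixes B :: "nat set"
  assumes "upper_density B > 0"
  shows "\<exists>(f::nat \<Rightarrow> nat) (n::nat \<Rightarrow> nat). in_C_Id0 1 (unary_fn f) \<and> strict_mono n \<and>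
           (\<Union>i. {n i..<2 * n i}) \<subseteq> f ` B"
proof -
  obtain d :: real where d: "0 < ereal d" "ereal d < upper_density B"
    using ereal_dense2[OF assms] by blast
  have d0: "d > 0" using d by simp
  have freq: "\<forall>N. \<exists>m\<ge>N. d < real (S B m) / real m"
  proof (rule ccontr)
    assume "\<not> ?thesis"
    then have "\<forall>\<^sub>F m in sequentially. ereal (real (card (B \<inter> {0..<m})) / real m) \<le> ereal d"
      unfolding S_def eventually_sequentially by (auto simp: not_less)
    then have "upper_density B \<le> ereal d" unfolding upper_density_def
      by (intro Limsup_bounded) auto
    with d show False by simp
  qed
  define G where "G = {v. \<exists>m. 2 * v \<le> S B m \<and> d * real m \<le> 4 * real v}"
  have infG: "infinite G"
    unfolding infinite_nat_iff_unbounded_le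
  proof
    fix M
    obtain N :: nat where N: "real N \<ge> (2 * real M + 2) / d" using real_arch_simple by blast
    obtain m where m: "m \<ge> N" "d < real (S B m) / real m" using freq by blast
    have mpos: "m > 0" using m(2) d0 by (cases m) auto
    have dm: "d * real m < real (S B m)" using m(2) mpos by (simp add: field_simps)
    have "d * real N \<ge> 2 * real M + 2" using N d0 by (simp add: field_simps)
    moreover have "d * real m \<ge> d * real N" using m(1) d0 by simp
    ultimately have dm2: "d * real m \<ge> 2 * real M + 2" by linarith
    define v where "v = S B m div 2"
    have "2 * v \<le> S B m" unfolding v_def by simp
    moreover have "real (S B m) \<le> 2 * real v + 1" unfolding v_def by linarith
    moreover have "d * real m \<le> 4 * real v" using dm dm2 calculation by linarith
    ultimately have "v \<in> G" unfolding G_def by blast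
    moreover have "v \<ge> M" using dm dm2 \<open>real (S B m) \<le> 2 * real v + 1\<close> by linarith
    ultimately show "\<exists>v\<ge>M. v \<in> G" by blast
  qed
  define n where "n = enumerate G"
  have sm: "strict_mono n" unfolding n_def using infG by (rule strict_mono_enumerate)
  have nG: "n i \<in> G" for i unfolding n_def using infG by (rule enumerate_in_set)
  define f where "f x = (if x \<in> B \<and> (\<exists>v\<in>G. v \<le> S B x \<and> S B x < 2 * v) then S B x else 0)" for x
  have cover: "(\<Union>i. {n i..<2 * n i}) \<subseteq> f ` B"
  proof
    fix y assume "y \<in> (\<Union>i. {n i..<2 * n i})"
    then obtain i where i: "n i \<le> y" "y < 2 * n i" by auto
    obtain m where m: "2 * n i \<le> S B m" using nG[of i] unfolding G_def by blast
    obtain x where x: "x \<in> B" "S B x = y" using S_hit[of y B m] i m by auto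
    have "f x = y" unfolding f_def using x i nG[of i] by auto
    then show "y \<in> f ` B" using x by blast
  qed
  define K :: nat where "K = nat \<lceil>4 / d\<rceil> + 1"
  have K: "real K \<ge> 4 / d" "K > 0" unfolding K_def by linarith+
  have C: "upper_density (f ` A) = 0" if A: "upper_density A = 0" for A
  proof -
    have sub: "f ` A \<inter> {0..<N} \<subseteq> insert 0 (S B ` (A \<inter> {0..<K * N}))" for N
    proof
      fix y assume y: "y \<in> f ` A \<inter> {0..<N}"
      then obtain x where x: "x \<in> A" "y = f x" "y < N" by auto
      show "y \<in> insert 0 (S B ` (A \<inter> {0..<K * N}))"
      proof (cases "x \<in> B \<and> (\<exists>v\<in>G. v \<le> S B x \<and> S B x < 2 * v)")
        case False
        then have "y = 0" using x(2) unfolding f_def by auto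
        then show ?thesis by simp
      next
        case True
        then obtain v where v: "v \<in> G" "v \<le> S B x" "S B x < 2 * v" by auto
        obtain m where m: "2 * v \<le> S B m" "d * real m \<le> 4 * real v" using v(1) unfolding G_def by blast
        have yS: "y = S B x" using True x unfolding f_def by simp
        have "x < m"
        proof (rule ccontr)
          assume "\<not> x < m"
          then have "S B m \<le> S B x" by (intro S_mono) simp
          with v(3) m(1) show False by simp
        qed
        have "real v < real N" using v(2) yS x(3) by simp
        then have "d * real m < 4 * real N" using m(2) by linarith
        then have "real m < 4 / d * real N" using d0 by (simp add: field_simps)
        also have "\<dots> \<le> real K * real N" using K by (intro mult_right_mono) auto
        finally have "m < K * N" by (metis of_nat_less_iff of_nat_mult)
        with \<open>x < m\<close> have "x \<in> A \<inter> {0..<K * N}" using x by auto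
        then show ?thesis using yS by auto
      qed
    qed
    have cb: "card (f ` A \<inter> {0..<N}) \<le> 1 + card (A \<inter> {0..<K * N})" for N
    proof -
      have "card (f ` A \<inter> {0..<N}) \<le> card (insert 0 (S B ` (A \<inter> {0..<K * N})))"
        by (intro card_mono sub) auto
      also have "\<dots> \<le> 1 + card (S B ` (A \<inter> {0..<K * N}))" by (simp add: card_insert_if)
      also have "\<dots> \<le> 1 + card (A \<inter> {0..<K * N})" by (simp add: card_image_le)
      finally show ?thesis .
    qed
    define r where "r N = real (card (A \<inter> {0..<N})) / real N" for N
    have r0: "r \<longlonglongrightarrow> 0" unfolding r_def using A by (rule ud_zero_tendsto)
    have smK: "strict_mono (\<lambda>N. K * N)" using K(2) by (simp add: strict_mono_def)
    have "(r \<circ> (\<lambda>N. K * N)) \<longlonglongrightarrow> 0" using LIMSEQ_subseq_LIMSEQ[OF r0 smK] .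
    then have "(\<lambda>N. real K * r (K * N)) \<longlonglongrightarrow> real K * 0"
      by (intro tendsto_mult tendsto_const) (simp add: comp_def)
    then have h: "(\<lambda>N. 1 / real N + real K * r (K * N)) \<longlonglongrightarrow> 0 + real K * 0"
      by (intro tendsto_add lim_1_over_n)
    show ?thesis
    proof (rule tendsto_ud_zero, rule tendsto_sandwich[OF _ _ tendsto_const h[simplified]])
      show "\<forall>\<^sub>F N in sequentially. 0 \<le> real (card (f ` A \<inter> {0..<N})) / real N"
        by simp
      show "\<forall>\<^sub>F N in sequentially. real (card (f ` A \<inter> {0..<N})) / real N \<le> 1 / real N + real K * r (K * N)"
        unfolding eventually_sequentially
      proof (intro exI allI impI)
        fix N :: nat assume "N \<ge> 1"
        then have Np: "real N > 0" by simp
        have "real K * r (K * N) = real (card (A \<inter> {0..<K * N})) / real N"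
          unfolding r_def using K(2) Np by (simp add: field_simps)
        then have "1 / real N + real K * r (K * N) = (1 + real (card (A \<inter> {0..<K * N}))) / real N"
          by (simp add: add_divide_distrib)
        moreover have "real (card (f ` A \<inter> {0..<N})) \<le> 1 + real (card (A \<inter> {0..<K * N}))"
          using cb[of N] by linarith
        ultimately show "real (card (f ` A \<inter> {0..<N})) / real N \<le> 1 / real N + real K * r (K * N)"
          using Np by (simp add: divide_right_mono)
      qed
    qed
  qed
  have "in_C_Id0 1 (unary_fn f)"
  proof -
    have "unary_fn f ` tuples 1 A = f ` A" for A
      unfolding tuples_1 image_image unary_fn_def by simp
    then show ?thesis unfolding in_C_Id0_def using C by simp
  qed
  then show ?thesis using sm cover by blast
qed

end
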